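(* Let $m\ge 2$, $R>0$, $h\in C^2([0,\infty))$ with $h'(r)\ge 0$, and let $B(R)$ be the ball of radius $R$ centered at the origin. If $\alpha\ge -\sigma_1(B(R);\gamma_h)$, then $\lambda_{2,\alpha}(B(R);\gamma_h)\ge 0$.
   Context: $d\gamma_h=e^{h(|x|)}dx$. $\lambda_{2,\alpha}(B(R);\gamma_h)$ is the second eigenvalue (counted with multiplicity) of the Robin problem $-\operatorname{div}(e^{h(|x|)}\nabla u)=\lambda e^{h(|x|)}u$ in $B(R)$, $\partial u/\partial\nu+\alpha u=0$ on $\partial B(R)$, i.e. $\lambda_{2,\alpha}=\inf\{\frac{\int|\nabla u|^2d\gamma_h+\alpha\int_{\partial B(R)}u^2e^hdA}{\int u^2d\gamma_h}: u\in W^{1,2}\setminus\{0\},\ \int uu_1d\gamma_h=0\}$ with $u_1$ a first eigenfunction. $\sigma_1(B(R);\gamma_h)=\inf\{\frac{\int_{B(R)}|\nabla u|^2d\gamma_h}{\int_{\partial B(R)}u^2e^{h}dA}: u\ne 0,\ \int_{\partial B(R)}ue^{h}dA=0\}$ is the first nonzero Steklov eigenvalue of $-\operatorname{div}(e^{h}\nabla u)=0$, $\partial u/\partial\nu=\sigma u$. *)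

theory Defs
  imports "HOL-Analysis.Analysis"
begin

text \<open>Conventions. Points of R^m are vectors of type real^'m; the dimension is CARD('m).
  B(R) = ball 0 R. Integrals are (Henstock-Kurzweil) integrals over the open ball.\<close>

text \<open>Surface integral over the sphere of radius R centred at 0, via the cone-measure
  (polar coordinates) formula: the integral of f over the sphere equals
  (m/R) times the integral over B(R) of f(R x/|x|).\<close>
definition sphere_integral :: "real \<Rightarrow> (real^'m \<Rightarrow> real) \<Rightarrow> real" where
  "sphere_integral R f =
     (real CARD('m) / R) * integral (ball 0 R) (\<lambda>x. f ((R / norm x) *\<^sub>R x))"

text \<open>Integral with respect to d gamma_h = e^{h(|x|)} dx over B(R).\<close>
definition wint :: "(real \<Rightarrow> real) \<Rightarrow> real \<Rightarrow> (real^'m \<Rightarrow> real) \<Rightarrow> real" where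
  "wint h R f = integral (ball 0 R) (\<lambda>x. f x * exp (h (norm x)))"

definition bint :: "(real \<Rightarrow> real) \<Rightarrow> real \<Rightarrow> (real^'m \<Rightarrow> real) \<Rightarrow> real" where
  "bint h R f = sphere_integral R (\<lambda>x. f x * exp (h (norm x)))"

definition C1_cball :: "real \<Rightarrow> (real^'m \<Rightarrow> real) \<Rightarrow> (real^'m \<Rightarrow> real^'m) \<Rightarrow> bool" where
  "C1_cball R u g \<longleftrightarrow> continuous_on (cball 0 R) g \<and>
     (\<forall>x\<in>cball 0 R. (u has_derivative (\<lambda>v. g x \<bullet> v)) (at x within cball 0 R))"

definition robin_quot ::
  "(real \<Rightarrow> real) \<Rightarrow> real \<Rightarrow> real \<Rightarrow> (real^'m \<Rightarrow> real) \<Rightarrow> (real^'m \<Rightarrow> real^'m) \<Rightarrow> real" where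
  "robin_quot h \<alpha> R u g =
     (wint h R (\<lambda>x. (norm (g x))\<^sup>2) + \<alpha> * bint h R (\<lambda>x. (u x)\<^sup>2)) / wint h R (\<lambda>x. (u x)\<^sup>2)"

definition first_robin_eigenfunction ::
  "(real \<Rightarrow> real) \<Rightarrow> real \<Rightarrow> real \<Rightarrow> (real^'m::finite \<Rightarrow> real) \<Rightarrow> bool" where
  "first_robin_eigenfunction h \<alpha> R u1 \<longleftrightarrow>
     (\<exists>g1. C1_cball R u1 g1 \<and> wint h R (\<lambda>x. (u1 x)\<^sup>2) > 0 \<and>
        (\<forall>(u::real^'m \<Rightarrow> real) g. C1_cball R u g \<and> wint h R (\<lambda>x. (u x)\<^sup>2) > 0 \<longrightarrow>
           robin_quot h \<alpha> R u1 g1 \<le> robin_quot h \<alpha> R u g))"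

definition lambda2_robin ::
  "(real \<Rightarrow> real) \<Rightarrow> real \<Rightarrow> real \<Rightarrow> (real^'m \<Rightarrow> real) \<Rightarrow> real" where
  "lambda2_robin h \<alpha> R u1 =
     Inf {robin_quot h \<alpha> R u g | u g. C1_cball R u g \<and> wint h R (\<lambda>x. (u x)\<^sup>2) > 0 \<and>
                                    wint h R (\<lambda>x. u x * u1 x) = 0}"

definition sigma1_steklov :: "(real \<Rightarrow> real) \<Rightarrow> real \<Rightarrow> ('m::finite) itself \<Rightarrow> real" where
  "sigma1_steklov h R _ =
     Inf {wint h R (\<lambda>x. (norm (g x))\<^sup>2) / bint h R (\<lambda>x. (u x)\<^sup>2) | u g.
            C1_cball R (u :: real^'m \<Rightarrow> real) g \<and> bint h R (\<lambda>x. (u x)\<^sup>2) > 0 \<and> bint h R u = 0}"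

end

theory Submission imports Defs begin

lemma integral_nonneg_any:
  fixes f :: "'n::euclidean_space \<Rightarrow> real"
  assumes "\<And>x. x \<in> S \<Longrightarrow> 0 \<le> f x"
  shows "0 \<le> integral S f"
  using assms integral_nonneg not_integrable_integral by (metis order_refl)

lemma int_ball:
  fixes F :: "real^'m \<Rightarrow> real"
  assumes "continuous_on (ball 0 R - {0}) F" "\<And>x. x \<in> ball 0 R - {0} \<Longrightarrow> \<bar>F x\<bar> \<le> B"
  shows "F integrable_on ball 0 R"
proof -
  have L: "ball 0 R - {0} \<in> lmeasurable"
    by (intro fmeasurable_Diff) auto
  have S: "ball 0 R - {0} \<in> sets lebesgue" using L fmeasurable_def by blast
  have "F integrable_on (ball 0 R - {0})"
  proof (rule measurable_bounded_by_integrable_imp_integrable_real[where g="\<lambda>_. B"])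
    show "F \<in> borel_measurable (lebesgue_on (ball 0 R - {0}))"
      by (rule continuous_imp_measurable_on_sets_lebesgue[OF assms(1) S])
    show "(\<lambda>_. B) integrable_on ball 0 R - {0}" by (rule integrable_on_const[OF L])
    show "\<bar>F x\<bar> \<le> B" if "x \<in> ball 0 R - {0}" for x using assms(2) that by blast
    show "ball 0 R - {0} \<in> sets lebesgue" by (rule S)
  qed
  then show ?thesis
  proof (rule integrable_spike_set)
    have "{x \<in> ball 0 R - {0} - ball 0 R. F x \<noteq> 0} = {}" by blast
    then show "negligible {x \<in> ball 0 R - {0} - ball 0 R. F x \<noteq> 0}" by (metis negligible_empty)
    show "negligible {x \<in> ball 0 R - (ball 0 R - {0}). F x \<noteq> 0}"
      by (rule negligible_subset[of "{0}"]) auto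
  qed
qed

lemma cont_bounded:
  fixes F :: "'a::metric_space \<Rightarrow> real"
  assumes "continuous_on S F" "compact S"
  obtains B where "\<And>x. x \<in> S \<Longrightarrow> \<bar>F x\<bar> \<le> B"
proof -
  have "bounded (F ` S)" using assms compact_continuous_image compact_imp_bounded by blast
  then show ?thesis using that unfolding bounded_real by blast
qed

lemma W_int:
  fixes F :: "real^'m \<Rightarrow> real"
  assumes "continuous_on (cball 0 R) F"
  shows "F integrable_on ball 0 R"
proof -
  obtain B where B: "\<And>x. x \<in> cball 0 R \<Longrightarrow> \<bar>F x\<bar> \<le> B" using cont_bounded[OF assms compact_cball] by metis
  show ?thesis
  proof (rule int_ball[where B=B])
    show "continuous_on (ball 0 R - {0}) F"
      by (rule continuous_on_subset[OF assms]) (meson Diff_subset ball_subset_cball order_trans)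
    show "\<bar>F x\<bar> \<le> B" if "x \<in> ball 0 R - {0}" for x
      using B that by (meson DiffD1 ball_subset_cball subsetD)
  qed
qed

lemma S_int:
  fixes F :: "real^'m \<Rightarrow> real"
  assumes "continuous_on (sphere 0 R) F" "R > 0"
  shows "(\<lambda>x. F ((R / norm x) *\<^sub>R x)) integrable_on ball 0 R"
proof -
  obtain B where B: "\<And>x. x \<in> sphere 0 R \<Longrightarrow> \<bar>F x\<bar> \<le> B" using cont_bounded[OF assms(1) compact_sphere] by metis
  have sp: "(R / norm x) *\<^sub>R x \<in> sphere 0 R" if "x \<noteq> 0" for x :: "real^'m"
    using that assms by auto
  have c: "continuous_on (ball 0 R - {0}) (\<lambda>x::real^'m. (R / norm x) *\<^sub>R x)"
    by (intro continuous_intros) auto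
  show ?thesis
  proof (rule int_ball[where B=B])
    show "continuous_on (ball 0 R - {0}) (\<lambda>x. F ((R / norm x) *\<^sub>R x))"
      by (rule continuous_on_compose2[OF assms(1) c]) (use sp in blast)
    show "\<bar>F ((R / norm x) *\<^sub>R x)\<bar> \<le> B" if "x \<in> ball 0 R - {0}" for x :: "real^'m"
      using B sp that by blast
  qed
qed


lemma int_lin3:
  fixes F G H :: "real^'m \<Rightarrow> real"
  assumes "F integrable_on S" "G integrable_on S" "H integrable_on S"
  shows "integral S (\<lambda>x. a * F x + b * G x + c * H x) =
         a * integral S F + b * integral S G + c * integral S H"
proof -
  have 1: "(\<lambda>x. a * F x + b * G x) integrable_on S"
    using assms by (intro integrable_add integrable_on_mult_right)
  have "integral S (\<lambda>x. a * F x + b * G x + c * H x) = integral S (\<lambda>x. a * F x + b * G x) + integral S (\<lambda>x. c * H x)"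
    using assms 1 by (intro integral_add integrable_on_mult_right)
  also have "integral S (\<lambda>x. a * F x + b * G x) = a * integral S F + b * integral S G"
    using assms by (simp add: integral_add integrable_on_mult_right)
  finally show ?thesis by simp
qed

lemma int_lin2:
  fixes F G :: "real^'m \<Rightarrow> real"
  assumes "F integrable_on S" "G integrable_on S"
  shows "integral S (\<lambda>x. a * F x + b * G x) = a * integral S F + b * integral S G"
  using assms by (simp add: integral_add integrable_add integral_mult_right integrable_on_mult_right)

lemma C1_cont:
  assumes "C1_cball R u g" shows "continuous_on (cball 0 R) u"
  using assms unfolding C1_cball_def
  by (meson continuous_on_eq_continuous_within has_derivative_continuous)

lemma C1_gcont:
  assumes "C1_cball R u g" shows "continuous_on (cball 0 R) g"
  using assms unfolding C1_cball_def by blast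

lemma C1_lin:
  assumes "C1_cball R u g" "C1_cball R w k"
  shows "C1_cball R (\<lambda>x. a * u x + b * w x) (\<lambda>x. a *\<^sub>R g x + b *\<^sub>R k x)"
  unfolding C1_cball_def
proof safe
  show "continuous_on (cball 0 R) (\<lambda>x. a *\<^sub>R g x + b *\<^sub>R k x)"
    using C1_gcont[OF assms(1)] C1_gcont[OF assms(2)] by (intro continuous_intros)
  fix x :: "real^'a" assume x: "x \<in> cball 0 R"
  have "((\<lambda>x. a * u x + b * w x) has_derivative (\<lambda>v. a * (g x \<bullet> v) + b * (k x \<bullet> v))) (at x within cball 0 R)"
    using assms x unfolding C1_cball_def by (auto intro!: derivative_eq_intros)
  then show "((\<lambda>x. a * u x + b * w x) has_derivative (\<lambda>v. (a *\<^sub>R g x + b *\<^sub>R k x) \<bullet> v)) (at x within cball 0 R)"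
    by (simp add: inner_add_left)
qed

lemma C1_const: "C1_cball R (\<lambda>x. c) (\<lambda>x. 0)"
  unfolding C1_cball_def by (auto intro!: derivative_eq_intros)

lemma C1_coord: "C1_cball R (\<lambda>x. x $ i) (\<lambda>x. axis i 1)"
  unfolding C1_cball_def
proof safe
  fix x :: "real^'a"
  have "((\<lambda>x. x $ i) has_derivative (\<lambda>v. v $ i)) (at x within cball 0 R)"
    by (rule bounded_linear_imp_has_derivative) (rule bounded_linear_vec_nth)
  then show "((\<lambda>x. x $ i) has_derivative (\<lambda>v. axis i 1 \<bullet> v)) (at x within cball 0 R)"
    by (simp add: inner_axis' )
qed simp

lemma pos_int:
  fixes F :: "real^'m \<Rightarrow> real"
  assumes "R > 0" "continuous_on (cball 0 R) F" "\<And>x. x \<in> cball 0 R \<Longrightarrow> 0 \<le> F x"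
    "x0 \<in> ball 0 R" "F x0 \<noteq> 0"
  shows "integral (ball 0 R) F > 0"
proof -
  have i: "F integrable_on ball 0 R" by (rule W_int[OF assms(2)])
  have ge: "integral (ball 0 R) F \<ge> 0"
  proof (rule integral_nonneg_any)
    fix x assume "x \<in> ball (0::real^'m) R" then show "0 \<le> F x" using assms(3) by simp
  qed
  have neg: "negligible (cball 0 R - ball 0 R :: (real^'m) set)"
    using negligible_sphere[of "0::real^'m" R] by (simp add: cball_diff_eq_sphere)
  have eq: "(F has_integral integral (ball 0 R) F) (cball 0 R) \<longleftrightarrow> (F has_integral integral (ball 0 R) F) (ball 0 R)"
  proof (rule has_integral_spike_set_eq)
    show "negligible {x \<in> cball 0 R - ball 0 R. F x \<noteq> 0}" by (rule negligible_subset[OF neg]) blast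
    have "{x \<in> ball 0 R - cball 0 R. F x \<noteq> 0} = {}" by auto
    then show "negligible {x \<in> ball 0 R - cball 0 R. F x \<noteq> 0}" by (metis negligible_empty)
  qed
  have hi: "(F has_integral integral (ball 0 R) F) (cball 0 R)"
    using eq i by (simp add: has_integral_integral)
  have False if z: "integral (ball 0 R) F = 0"
  proof -
    have "(F has_integral 0) (closure (ball 0 R))" using hi z assms(1) by simp
    then have "F x0 = 0"
    proof (rule has_integral_0_closure_imp_0[rotated 6])
      show "continuous_on (closure (ball 0 R)) F" using assms(1,2) by simp
      show "x0 \<in> closure (ball 0 R)" using assms(4) closure_subset by blast
      show "0 \<le> F x" if "x \<in> ball 0 R" for x using assms(3) that by simp
      show "0 < emeasure lborel (ball (0::real^'m) R)" using assms(1)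
        by (simp add: emeasure_ball)
      show "emeasure lborel (ball (0::real^'m) R) < \<infinity>" by (rule emeasure_lborel_ball_finite)
      show "emeasure lborel (closure (ball (0::real^'m) R)) = emeasure lborel (ball (0::real^'m) R)"
        using assms(1) by (simp add: emeasure_ball emeasure_cball)
      show "open (ball (0::real^'m) R)" by simp
    qed
    then show False using assms(5) by simp
  qed
  then show ?thesis using ge by fastforce
qed

lemma quad_zero:
  fixes c d :: real
  assumes "\<And>t. 0 \<le> t\<^sup>2 * d + 2 * t * c"
  shows "c = 0"
proof (rule ccontr)
  assume c: "c \<noteq> 0"
  define D where "D = \<bar>d\<bar> + 1"
  have D: "D > 0" unfolding D_def by simp
  define t where "t = - c / D"
  have "t\<^sup>2 * d + 2 * t * c = c\<^sup>2 * (d - 2 * D) / D\<^sup>2"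
    unfolding t_def using D by (simp add: field_simps power2_eq_square)
  also have "\<dots> < 0"
  proof -
    have "d - 2 * D < 0" unfolding D_def by (cases "d \<ge> 0") auto
    moreover have "c\<^sup>2 > 0" using c by simp
    ultimately show ?thesis using D by (simp add: divide_neg_pos mult_pos_neg)
  qed
  finally show False using assms[of t] by simp
qed

context
  fixes h :: "real \<Rightarrow> real" and R :: real
  assumes hc: "continuous_on {0..} h" and Rpos: "R > 0"
begin

lemma wcont:
  fixes f :: "real^'m \<Rightarrow> real"
  assumes "continuous_on S f"
  shows "continuous_on S (\<lambda>x. f x * exp (h (norm x)))"
proof -
  have "continuous_on S (\<lambda>x. h (norm x))"
    by (rule continuous_on_compose2[OF hc]) (auto intro: continuous_intros)
  then show ?thesis using assms by (intro continuous_intros)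
qed

lemma wint_lin3:
  fixes f1 f2 f3 :: "real^'m \<Rightarrow> real"
  assumes "continuous_on (cball 0 R) f1" "continuous_on (cball 0 R) f2" "continuous_on (cball 0 R) f3"
  shows "wint h R (\<lambda>x. a * f1 x + b * f2 x + c * f3 x) = a * wint h R f1 + b * wint h R f2 + c * wint h R f3"
proof -
  have "wint h R (\<lambda>x. a * f1 x + b * f2 x + c * f3 x) =
    integral (ball 0 R) (\<lambda>x. a * (f1 x * exp (h (norm x))) + b * (f2 x * exp (h (norm x))) + c * (f3 x * exp (h (norm x))))"
    unfolding wint_def by (simp add: algebra_simps)
  also have "\<dots> = a * wint h R f1 + b * wint h R f2 + c * wint h R f3"
    unfolding wint_def using assms by (intro int_lin3 W_int wcont)
  finally show ?thesis .
qed

lemma wint_lin2: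
  fixes f1 f2 :: "real^'m \<Rightarrow> real"
  assumes "continuous_on (cball 0 R) f1" "continuous_on (cball 0 R) f2"
  shows "wint h R (\<lambda>x. a * f1 x + b * f2 x) = a * wint h R f1 + b * wint h R f2"
  using wint_lin3[OF assms continuous_on_const, of a b 0 0] by simp

lemma sphere_lin3:
  fixes F1 F2 F3 :: "real^'m \<Rightarrow> real"
  assumes "continuous_on (sphere 0 R) F1" "continuous_on (sphere 0 R) F2" "continuous_on (sphere 0 R) F3"
  shows "sphere_integral R (\<lambda>x. a * F1 x + b * F2 x + c * F3 x) = a * sphere_integral R F1 + b * sphere_integral R F2 + c * sphere_integral R F3"
  unfolding sphere_integral_def
  using int_lin3[OF S_int[OF assms(1) Rpos] S_int[OF assms(2) Rpos] S_int[OF assms(3) Rpos], of a b c]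
  by (simp add: algebra_simps)

lemma bint_lin3:
  fixes f1 f2 f3 :: "real^'m \<Rightarrow> real"
  assumes "continuous_on (sphere 0 R) f1" "continuous_on (sphere 0 R) f2" "continuous_on (sphere 0 R) f3"
  shows "bint h R (\<lambda>x. a * f1 x + b * f2 x + c * f3 x) = a * bint h R f1 + b * bint h R f2 + c * bint h R f3"
proof -
  have "bint h R (\<lambda>x. a * f1 x + b * f2 x + c * f3 x) =
    sphere_integral R (\<lambda>x. a * (f1 x * exp (h (norm x))) + b * (f2 x * exp (h (norm x))) + c * (f3 x * exp (h (norm x))))"
    unfolding bint_def by (simp add: algebra_simps)
  also have "\<dots> = a * bint h R f1 + b * bint h R f2 + c * bint h R f3"
    unfolding bint_def using assms by (intro sphere_lin3 wcont)
  finally show ?thesis .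
qed

lemma bint_lin2:
  fixes f1 f2 :: "real^'m \<Rightarrow> real"
  assumes "continuous_on (sphere 0 R) f1" "continuous_on (sphere 0 R) f2"
  shows "bint h R (\<lambda>x. a * f1 x + b * f2 x) = a * bint h R f1 + b * bint h R f2"
  using bint_lin3[OF assms continuous_on_const, of a b 0 0] by simp

lemma wint_nonneg:
  fixes f :: "real^'m \<Rightarrow> real"
  assumes "\<And>x. 0 \<le> f x" shows "0 \<le> wint h R f"
  unfolding wint_def using assms by (intro integral_nonneg_any) simp

lemma bint_nonneg:
  fixes f :: "real^'m \<Rightarrow> real"
  assumes "\<And>x. 0 \<le> f x" shows "0 \<le> bint h R f"
  unfolding bint_def sphere_integral_def using assms Rpos
  by (intro mult_nonneg_nonneg integral_nonneg_any) simp_all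


lemma sph: "continuous_on (cball 0 R) f \<Longrightarrow> continuous_on (sphere 0 R) f"
  by (erule continuous_on_subset) auto

lemma W_expand:
  fixes u w :: "real^'m \<Rightarrow> real"
  assumes "continuous_on (cball 0 R) u" "continuous_on (cball 0 R) w"
  shows "wint h R (\<lambda>x. (a * u x + b * w x)\<^sup>2) =
     a\<^sup>2 * wint h R (\<lambda>x. (u x)\<^sup>2) + b\<^sup>2 * wint h R (\<lambda>x. (w x)\<^sup>2) + (2*a*b) * wint h R (\<lambda>x. u x * w x)"
proof -
  have "wint h R (\<lambda>x. (a * u x + b * w x)\<^sup>2) = wint h R (\<lambda>x. a\<^sup>2 * (u x)\<^sup>2 + b\<^sup>2 * (w x)\<^sup>2 + (2*a*b) * (u x * w x))"
    by (simp add: power2_eq_square algebra_simps)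
  also have "\<dots> = a\<^sup>2 * wint h R (\<lambda>x. (u x)\<^sup>2) + b\<^sup>2 * wint h R (\<lambda>x. (w x)\<^sup>2) + (2*a*b) * wint h R (\<lambda>x. u x * w x)"
    by (rule wint_lin3) (simp_all add: assms continuous_on_mult continuous_on_power)
  finally show ?thesis .
qed

lemma E_expand:
  fixes u w :: "real^'m \<Rightarrow> real"
  assumes "C1_cball R u g" "C1_cball R w k"
  shows "wint h R (\<lambda>x. (norm (a *\<^sub>R g x + b *\<^sub>R k x))\<^sup>2) + \<alpha> * bint h R (\<lambda>x. (a * u x + b * w x)\<^sup>2) =
     a\<^sup>2 * (wint h R (\<lambda>x. (norm (g x))\<^sup>2) + \<alpha> * bint h R (\<lambda>x. (u x)\<^sup>2)) +
     b\<^sup>2 * (wint h R (\<lambda>x. (norm (k x))\<^sup>2) + \<alpha> * bint h R (\<lambda>x. (w x)\<^sup>2)) +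
     (2*a*b) * (wint h R (\<lambda>x. g x \<bullet> k x) + \<alpha> * bint h R (\<lambda>x. u x * w x))"
proof -
  note cu = C1_cont[OF assms(1)] and cw = C1_cont[OF assms(2)]
  note cg = C1_gcont[OF assms(1)] and ck = C1_gcont[OF assms(2)]
  have n: "(norm (a *\<^sub>R g x + b *\<^sub>R k x))\<^sup>2 = a\<^sup>2 * (norm (g x))\<^sup>2 + b\<^sup>2 * (norm (k x))\<^sup>2 + (2*a*b) * (g x \<bullet> k x)" for x
    unfolding power2_norm_eq_inner by (simp add: inner_add_left inner_add_right inner_commute[of "k x" "g x"] algebra_simps power2_eq_square)
  have 1: "wint h R (\<lambda>x. (norm (a *\<^sub>R g x + b *\<^sub>R k x))\<^sup>2) =
     a\<^sup>2 * wint h R (\<lambda>x. (norm (g x))\<^sup>2) + b\<^sup>2 * wint h R (\<lambda>x. (norm (k x))\<^sup>2) + (2*a*b) * wint h R (\<lambda>x. g x \<bullet> k x)"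
    unfolding n by (rule wint_lin3) (simp_all add: cg ck continuous_on_inner continuous_on_norm continuous_on_power)
  have "bint h R (\<lambda>x. (a * u x + b * w x)\<^sup>2) = bint h R (\<lambda>x. a\<^sup>2 * (u x)\<^sup>2 + b\<^sup>2 * (w x)\<^sup>2 + (2*a*b) * (u x * w x))"
    by (simp add: power2_eq_square algebra_simps)
  also have "\<dots> = a\<^sup>2 * bint h R (\<lambda>x. (u x)\<^sup>2) + b\<^sup>2 * bint h R (\<lambda>x. (w x)\<^sup>2) + (2*a*b) * bint h R (\<lambda>x. u x * w x)"
    by (rule bint_lin3) (simp_all add: sph cu cw continuous_on_mult continuous_on_power)
  finally show ?thesis using 1 by (simp add: algebra_simps)
qed

end


lemma frac_ineq:
  fixes x y a b :: real
  assumes "0 < a" "0 < b" "x / a \<le> y / b"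
  shows "x * b \<le> y * a"
  using assms by (simp add: field_simps)

theorem proposition2p4:
  fixes h :: "real \<Rightarrow> real" and R \<alpha> :: real and u1 :: "real^'m \<Rightarrow> real"
  assumes "CARD('m) \<ge> 2"
    and "R > 0"
    and "\<exists>h' h''. (\<forall>r\<ge>0. (h has_real_derivative h' r) (at r within {0..}) \<and>
                          (h' has_real_derivative h'' r) (at r within {0..}) \<and> h' r \<ge> 0)
                 \<and> continuous_on {0..} h''"
    and "\<alpha> \<ge> - sigma1_steklov h R TYPE('m)"
    and "first_robin_eigenfunction h \<alpha> R u1"
  shows "lambda2_robin h \<alpha> R u1 \<ge> 0"
proof -
  obtain h' h'' where hd: "\<forall>r\<ge>0. (h has_real_derivative h' r) (at r within {0..}) \<and>
                          (h' has_real_derivative h'' r) (at r within {0..}) \<and> h' r \<ge> 0"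
    using assms(3) by blast
  have hc: "continuous_on {0..} h"
    unfolding continuous_on_eq_continuous_within
  proof
    fix r :: real assume "r \<in> {0..}"
    then have "(h has_real_derivative h' r) (at r within {0..})" using hd by auto
    then show "continuous (at r within {0..}) h" by (rule DERIV_continuous)
  qed
  note Rpos = assms(2)
  obtain g1 where C1u1: "C1_cball R u1 g1" and W1': "wint h R (\<lambda>x. (u1 x)\<^sup>2) > 0" and
    min: "\<And>(u::real^'m \<Rightarrow> real) g. C1_cball R u g \<Longrightarrow> wint h R (\<lambda>x. (u x)\<^sup>2) > 0 \<Longrightarrow>
            robin_quot h \<alpha> R u1 g1 \<le> robin_quot h \<alpha> R u g"
    using assms(5) unfolding first_robin_eigenfunction_def by blast
  define E where "E = (\<lambda>(u::real^'m\<Rightarrow>real) (g::real^'m\<Rightarrow>real^'m).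
      wint h R (\<lambda>x. (norm (g x))\<^sup>2) + \<alpha> * bint h R (\<lambda>x. (u x)\<^sup>2))"
  define W where "W = (\<lambda>u::real^'m\<Rightarrow>real. wint h R (\<lambda>x. (u x)\<^sup>2))"
  have Q: "robin_quot h \<alpha> R u g = E u g / W u" for u g
    unfolding robin_quot_def E_def W_def by simp
  have W1: "W u1 > 0" using W1' by (simp add: W_def)
  note cu1 = C1_cont[OF C1u1]

  have stek: "E v k \<ge> 0" if vk: "C1_cball R v k" "bint h R v = 0" for v k
  proof -
    define G where "G = wint h R (\<lambda>x. (norm (k x))\<^sup>2)"
    define B where "B = bint h R (\<lambda>x. (v x)\<^sup>2)"
    have G0: "G \<ge> 0" unfolding G_def by (rule wint_nonneg[OF hc Rpos]) simp
    have B0: "B \<ge> 0" unfolding B_def by (rule bint_nonneg[OF hc Rpos]) simp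
    have EGB: "E v k = G + \<alpha> * B" by (simp add: E_def G_def B_def)
    show ?thesis
    proof (cases "B > 0")
      case True
      define S where "S = {wint h R (\<lambda>x. (norm (g x))\<^sup>2) / bint h R (\<lambda>x. (u x)\<^sup>2) | u g.
            C1_cball R (u :: real^'m \<Rightarrow> real) g \<and> bint h R (\<lambda>x. (u x)\<^sup>2) > 0 \<and> bint h R u = 0}"
      have mem: "G / B \<in> S" unfolding S_def G_def B_def using vk True[unfolded B_def] by blast
      have bdd: "bdd_below S"
      proof (rule bdd_belowI[where m=0])
        fix y assume "y \<in> S"
        then obtain u :: "real^'m \<Rightarrow> real" and g :: "real^'m \<Rightarrow> real^'m" where y: "y = wint h R (\<lambda>x. (norm (g x))\<^sup>2) / bint h R (\<lambda>x. (u x)\<^sup>2)"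
          and pos: "bint h R (\<lambda>x. (u x)\<^sup>2) > 0" unfolding S_def by blast
        have "wint h R (\<lambda>x. (norm (g x))\<^sup>2) \<ge> 0" by (rule wint_nonneg[OF hc Rpos]) simp
        then show "0 \<le> y" unfolding y using pos by simp
      qed
      have "sigma1_steklov h R TYPE('m) = Inf S" unfolding sigma1_steklov_def S_def ..
      then have "sigma1_steklov h R TYPE('m) \<le> G / B" using cInf_lower[OF mem bdd] by simp
      then have "-\<alpha> \<le> G / B" using assms(4) by linarith
      then have "-\<alpha> * B \<le> G" using True by (simp add: field_simps)
      then show ?thesis unfolding EGB by linarith
    next
      case False
      then have "B = 0" using B0 by simp
      then show ?thesis using G0 EGB by simp
    qed
  qed

  have key: "E u g / W u \<ge> 0"
    if C1: "C1_cball R u g" and Wu: "W u > 0" and orth: "wint h R (\<lambda>x. u x * u1 x) = 0" for u g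
  proof -
    note cu = C1_cont[OF C1]
    have orth': "wint h R (\<lambda>x. u1 x * u x) = 0" using orth by (simp add: mult.commute)
    define Eb where "Eb = wint h R (\<lambda>x. g1 x \<bullet> g x) + \<alpha> * bint h R (\<lambda>x. u1 x * u x)"
    have Wt: "W (\<lambda>x. 1 * u1 x + t * u x) = W u1 + t\<^sup>2 * W u" for t
      using W_expand[OF hc Rpos cu1 cu, of 1 t] orth' unfolding W_def by simp
    have Et: "E (\<lambda>x. 1 * u1 x + t * u x) (\<lambda>x. 1 *\<^sub>R g1 x + t *\<^sub>R g x) = E u1 g1 + t\<^sup>2 * E u g + 2 * t * Eb" for t
      using E_expand[OF hc Rpos C1u1 C1, of 1 t \<alpha>] unfolding E_def Eb_def by simp
    have ineq: "0 \<le> t\<^sup>2 * (W u1 * E u g - E u1 g1 * W u) + 2 * t * (W u1 * Eb)" for t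
    proof -
      have Wpos: "W u1 + t\<^sup>2 * W u > 0" using W1 Wu by (simp add: add_pos_nonneg)
      have "robin_quot h \<alpha> R u1 g1 \<le> robin_quot h \<alpha> R (\<lambda>x. 1 * u1 x + t * u x) (\<lambda>x. 1 *\<^sub>R g1 x + t *\<^sub>R g x)"
      proof (rule min[OF C1_lin[OF C1u1 C1]])
        show "wint h R (\<lambda>x. (1 * u1 x + t * u x)\<^sup>2) > 0" using Wt[of t] Wpos by (simp add: W_def)
      qed
      then have "E u1 g1 / W u1 \<le> (E u1 g1 + t\<^sup>2 * E u g + 2 * t * Eb) / (W u1 + t\<^sup>2 * W u)"
        unfolding Q Et Wt .
      then have "E u1 g1 * (W u1 + t\<^sup>2 * W u) \<le> (E u1 g1 + t\<^sup>2 * E u g + 2 * t * Eb) * W u1"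
        by (rule frac_ineq[OF W1 Wpos])
      then show ?thesis by (simp add: algebra_simps)
    qed
    have "W u1 * Eb = 0" by (rule quad_zero) (rule ineq)
    then have Eb0: "Eb = 0" using W1 by simp
    show ?thesis
    proof (rule ccontr)
      assume neg: "\<not> 0 \<le> E u g / W u"
      have Eun: "E u g < 0"
      proof (rule ccontr)
        assume "\<not> E u g < 0"
        then have "0 \<le> E u g / W u" using Wu by (simp add: divide_nonneg_pos)
        then show False using neg by simp
      qed
      have "robin_quot h \<alpha> R u1 g1 \<le> robin_quot h \<alpha> R u g"
        by (rule min[OF C1]) (use Wu in \<open>simp add: W_def\<close>)
      then have "E u1 g1 / W u1 < 0" using neg unfolding Q by linarith
      then have E1n: "E u1 g1 < 0"
      proof -
        assume a: "E u1 g1 / W u1 < 0"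
        show ?thesis
        proof (rule ccontr)
          assume "\<not> E u1 g1 < 0"
          then have "0 \<le> E u1 g1 / W u1" using W1 by (simp add: divide_nonneg_pos)
          then show False using a by simp
        qed
      qed
      define a where "a = (if bint h R u1 = 0 \<and> bint h R u = 0 then 1 else bint h R u1)"
      define b where "b = (if bint h R u1 = 0 \<and> bint h R u = 0 then 0 else - bint h R u)"
      have ab: "a \<noteq> 0 \<or> b \<noteq> 0" by (auto simp: a_def b_def)
      have bv: "bint h R (\<lambda>x. a * u x + b * u1 x) = 0"
        using bint_lin2[OF hc Rpos sph[OF hc Rpos cu] sph[OF hc Rpos cu1], of a b]
        by (auto simp: a_def b_def)
      have C1v: "C1_cball R (\<lambda>x. a * u x + b * u1 x) (\<lambda>x. a *\<^sub>R g x + b *\<^sub>R g1 x)"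
        by (rule C1_lin[OF C1 C1u1])
      have Eb': "wint h R (\<lambda>x. g x \<bullet> g1 x) + \<alpha> * bint h R (\<lambda>x. u x * u1 x) = Eb"
        unfolding Eb_def by (simp add: inner_commute mult.commute)
      have "E (\<lambda>x. a * u x + b * u1 x) (\<lambda>x. a *\<^sub>R g x + b *\<^sub>R g1 x) = a\<^sup>2 * E u g + b\<^sup>2 * E u1 g1"
        using E_expand[OF hc Rpos C1 C1u1, of a b \<alpha>] Eb' Eb0 unfolding E_def by simp
      also have "\<dots> < 0"
      proof -
        have x: "a\<^sup>2 * E u g \<le> 0" using Eun by (simp add: mult_nonneg_nonpos)
        have y: "b\<^sup>2 * E u1 g1 \<le> 0" using E1n by (simp add: mult_nonneg_nonpos)
        show ?thesis
        proof (cases "a = 0")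
          case True
          then have "b\<^sup>2 > 0" using ab by simp
          then have "b\<^sup>2 * E u1 g1 < 0" using E1n by (simp add: mult_pos_neg)
          then show ?thesis using x by linarith
        next
          case False
          then have "a\<^sup>2 > 0" by simp
          then have "a\<^sup>2 * E u g < 0" using Eun by (simp add: mult_pos_neg)
          then show ?thesis using y by linarith
        qed
      qed
      finally show False using stek[OF C1v bv] by linarith
    qed
  qed

  obtain i :: 'm where True by blast
  define A where "A = wint h R u1"
  define B where "B = wint h R (\<lambda>x. x $ i * u1 x)"
  define p where "p = (if A = 0 \<and> B = 0 then 1 else B)"
  define q where "q = (if A = 0 \<and> B = 0 then 0 else - A)"
  have pq: "p \<noteq> 0 \<or> q \<noteq> 0" by (auto simp: p_def q_def)
  define u0 where "u0 = (\<lambda>x::real^'m. p * 1 + q * x $ i)"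
  define g0 where "g0 = (\<lambda>x::real^'m. p *\<^sub>R (0::real^'m) + q *\<^sub>R axis i 1)"
  have C1u0: "C1_cball R u0 g0"
    unfolding u0_def g0_def by (rule C1_lin[OF C1_const C1_coord])
  have cu0: "continuous_on (cball 0 R) u0" unfolding u0_def by (intro continuous_intros)
  have orth0: "wint h R (\<lambda>x. u0 x * u1 x) = 0"
  proof -
    have "wint h R (\<lambda>x. u0 x * u1 x) = wint h R (\<lambda>x. p * u1 x + q * (x $ i * u1 x))"
      unfolding u0_def by (simp add: algebra_simps)
    also have "\<dots> = p * A + q * B" unfolding A_def B_def
      by (rule wint_lin2[OF hc Rpos cu1]) (intro continuous_intros cu1)
    also have "\<dots> = 0" by (auto simp: p_def q_def)
    finally show ?thesis .
  qed
  have Wu0: "W u0 > 0"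
  proof -
    define x0 where "x0 = (if p \<noteq> 0 then 0 else (R / 2) *\<^sub>R (axis i 1 :: real^'m))"
    have x0b: "x0 \<in> ball 0 R" using Rpos by (simp add: x0_def)
    have ux0: "u0 x0 \<noteq> 0" using pq Rpos by (auto simp: x0_def u0_def)
    have "integral (ball 0 R) (\<lambda>x. (u0 x)\<^sup>2 * exp (h (norm x))) > 0"
    proof (rule pos_int[OF Rpos _ _ x0b])
      show "continuous_on (cball 0 R) (\<lambda>x. (u0 x)\<^sup>2 * exp (h (norm x)))"
        by (rule wcont[OF hc Rpos]) (intro continuous_intros cu0)
      show "0 \<le> (u0 x)\<^sup>2 * exp (h (norm x))" for x by simp
      show "(u0 x0)\<^sup>2 * exp (h (norm x0)) \<noteq> 0" using ux0 by simp
    qed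
    then show ?thesis by (simp add: W_def wint_def)
  qed
  have ne: "\<exists>u g. C1_cball R u g \<and> wint h R (\<lambda>x. (u x)\<^sup>2) > 0 \<and> wint h R (\<lambda>x. u x * u1 x) = 0"
    using C1u0 Wu0 orth0 unfolding W_def by blast
  show ?thesis
    unfolding lambda2_robin_def
  proof (rule cInf_greatest)
    show "{robin_quot h \<alpha> R u g | u g. C1_cball R u g \<and> wint h R (\<lambda>x. (u x)\<^sup>2) > 0 \<and>
                                    wint h R (\<lambda>x. u x * u1 x) = 0} \<noteq> {}"
      using ne by blast
  next
    fix y assume "y \<in> {robin_quot h \<alpha> R u g | u g. C1_cball R u g \<and> wint h R (\<lambda>x. (u x)\<^sup>2) > 0 \<and>
                                    wint h R (\<lambda>x. u x * u1 x) = 0}"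
    then obtain u g where y: "y = robin_quot h \<alpha> R u g" and c: "C1_cball R u g"
      "wint h R (\<lambda>x. (u x)\<^sup>2) > 0" "wint h R (\<lambda>x. u x * u1 x) = 0" by blast
    show "0 \<le> y" unfolding y Q by (rule key[OF c(1) _ c(3)]) (use c(2) in \<open>simp add: W_def\<close>)
  qed
qed

end
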